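(* Let $\Lambda=\{\lambda_1,\dots,\lambda_m\}$ be a finite set of distinct points of the open unit disk $\mathbb{D}\subset\mathbb{C}$, and let $k_j=k(\lambda_j)\ge1$ be integers such that for every non-real $\lambda\in\Lambda$ we have $\overline{\lambda}\in\Lambda$ and $k(\overline{\lambda})=k(\lambda)$. If $\prod_{j=1}^m|\lambda_j|^{k_j}\ge1/2$, then there exists $f\in\mathcal{B}$ having a zero at $\lambda_j$ of multiplicity at least $k(\lambda_j)$ for every $j=1,\dots,m$.
   Context: $\mathcal{B}=\{1+\sum_{n=1}^\infty a_n x^n : a_n\in\{-1,0,1\}\}$, power series converging on $\mathbb{D}$. *)

theory Defs
  imports "HOL-Analysis.Analysis"
begin

text \<open>The class B: power series 1 + sum a_n x^n with a_n in {-1,0,1},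
  represented by their coefficient sequence.\<close>
definition coeffs_B :: "(nat \<Rightarrow> int) set" where
  "coeffs_B = {a. a 0 = 1 \<and> (\<forall>n\<ge>1. a n \<in> {-1, 0, 1})}"

definition ps_fun :: "(nat \<Rightarrow> int) \<Rightarrow> complex \<Rightarrow> complex" where
  "ps_fun a z = (\<Sum>n. of_int (a n) * z ^ n)"

definition zero_mult_ge :: "(complex \<Rightarrow> complex) \<Rightarrow> complex \<Rightarrow> nat \<Rightarrow> bool" where
  "zero_mult_ge f z k \<longleftrightarrow> (\<forall>i<k. (deriv ^^ i) f z = 0)"

end

theory Submission
  imports Defs "HOL-Real_Asymp.Real_Asymp" "HOL-Computational_Algebra.Polynomial"
begin


definition Psi :: "(nat \<Rightarrow> int) \<Rightarrow> complex \<Rightarrow> nat \<Rightarrow> complex" where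
  "Psi c z i = (\<Sum>n. of_int (c n) * of_nat n ^ i * z ^ n)"

definition PsiF :: "nat \<Rightarrow> (nat \<Rightarrow> int) \<Rightarrow> complex \<Rightarrow> nat \<Rightarrow> complex" where
  "PsiF M c z i = (\<Sum>n<M. of_int (c n) * of_nat n ^ i * z ^ n)"

lemma summable_npow:
  fixes r :: real assumes "0 \<le> r" "r < 1"
  shows "summable (\<lambda>n. real n ^ j * r ^ n)"
proof -
  have "conv_radius (\<lambda>n. real n ^ j) = ereal 1"
    by (rule conv_radius_ratio_limit_nonzero[of _ 1]) (simp_all, real_asymp)
  then show ?thesis using assms by (intro summable_in_conv_radius) simp
qed

lemma Psi_norm_summable:
  assumes "\<forall>n. \<bar>c n\<bar> \<le> 1" "norm z \<le> r" "r < 1"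
  shows "summable (\<lambda>n. norm (of_int (c n) * of_nat n ^ i * z ^ n :: complex))"
proof (rule summable_comparison_test[OF _ summable_npow[of r i]])
  show "\<exists>N. \<forall>n\<ge>N. norm (norm (of_int (c n) * of_nat n ^ i * z ^ n :: complex)) \<le> real n ^ i * r ^ n"
  proof (intro exI allI impI)
    fix n
    have cn: "\<bar>real_of_int (c n)\<bar> \<le> 1" using assms(1) by (metis of_int_abs of_int_le_1_iff)
    have "norm (of_int (c n) * of_nat n ^ i * z ^ n :: complex) = \<bar>real_of_int (c n)\<bar> * (real n ^ i * norm z ^ n)"
      by (simp add: norm_mult norm_power)
    also have "\<dots> \<le> 1 * (real n ^ i * r ^ n)"
      using assms cn by (intro mult_mono mult_left_mono power_mono) auto
    finally show "norm (norm (of_int (c n) * of_nat n ^ i * z ^ n :: complex)) \<le> real n ^ i * r ^ n" by simp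
  qed
qed (use assms in \<open>auto intro: order_trans[OF norm_ge_zero]\<close>)

lemma Psi_summable:
  assumes "\<forall>n. \<bar>c n\<bar> \<le> 1" "norm z < 1"
  shows "summable (\<lambda>n. of_int (c n) * of_nat n ^ i * z ^ n :: complex)"
  using Psi_norm_summable[OF assms(1) order_refl assms(2)] by (rule summable_norm_cancel)

lemma higher_deriv_eval_fps:
  fixes F :: "complex fps"
  assumes "ereal (norm z) < fps_conv_radius F"
  shows "(deriv ^^ i) (eval_fps F) z = eval_fps (fps_nth_deriv i F) z"
  using assms
proof (induction i arbitrary: F)
  case 0 then show ?case by simp
next
  case (Suc i F)
  have "(deriv ^^ Suc i) (eval_fps F) z = (deriv ^^ i) (deriv (eval_fps F)) z"
    unfolding funpow_Suc_right o_def ..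
  also have "eventually (\<lambda>w. w \<in> eball 0 (fps_conv_radius F)) (nhds z)"
    using Suc.prems by (intro eventually_nhds_in_open) auto
  hence "eventually (\<lambda>w. deriv (eval_fps F) w = eval_fps (fps_deriv F) w) (nhds z)"
    by eventually_elim (simp add: eval_fps_deriv)
  hence "(deriv ^^ i) (deriv (eval_fps F)) z = (deriv ^^ i) (eval_fps (fps_deriv F)) z"
    by (intro higher_deriv_cong_ev refl)
  also have "\<dots> = eval_fps (fps_nth_deriv i (fps_deriv F)) z"
    using Suc.prems fps_conv_radius_deriv[of F] by (intro Suc.IH) (auto intro: order.strict_trans2)
  finally show ?case by simp
qed

lemma fps_conv_radius_nth_deriv:
  fixes F :: "complex fps"
  shows "fps_conv_radius (fps_nth_deriv i F) \<ge> fps_conv_radius F"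
proof (induction i arbitrary: F)
  case (Suc i F)
  then show ?case using fps_conv_radius_deriv[of F] Suc.IH[of "fps_deriv F"] by (metis order_trans fps_nth_deriv.simps(2))
qed simp

lemma fps_X_power_nth_deriv:
  fixes F :: "complex fps"
  shows "fps_nth (fps_X ^ i * fps_nth_deriv i F) m = fps_nth F m * (\<Prod>t<i. (of_nat m - of_nat t))"
proof (induction i arbitrary: F m)
  case 0 then show ?case by simp
next
  case (Suc i F m)
  have e: "fps_X ^ Suc i * fps_nth_deriv (Suc i) F = fps_X * (fps_X ^ i * fps_nth_deriv i (fps_deriv F))"
    by (simp only: power_Suc fps_nth_deriv.simps mult.assoc)
  have "fps_nth (fps_X ^ Suc i * fps_nth_deriv (Suc i) F) m =
      (if m = 0 then 0 else fps_nth (fps_X ^ i * fps_nth_deriv i (fps_deriv F)) (m - 1))"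
    by (simp only: e fps_X_mult_nth)
  also have "\<dots> = (if m = 0 then 0 else fps_nth (fps_deriv F) (m - 1) * (\<Prod>t<i. (of_nat (m - 1) - of_nat t)))"
    using Suc.IH by simp
  also have "\<dots> = fps_nth F m * (\<Prod>t<Suc i. (of_nat m - of_nat t))"
  proof (cases m)
    case 0 then show ?thesis by (auto simp add: prod.lessThan_Suc_shift)
  next
    case (Suc m')
    have "(\<Prod>t<Suc i. (of_nat (Suc m') - of_nat t :: complex)) = of_nat (Suc m') * (\<Prod>t<i. of_nat m' - of_nat t)"
      by (subst prod.lessThan_Suc_shift) simp
    then show ?thesis using Suc by (simp add: mult_ac del: of_nat_Suc)
  qed
  finally show ?case .
qed

lemma ffact_poly:
  "(\<Prod>t<i. (x - of_nat t)) = poly (\<Prod>t<i. [:- of_nat t, 1:]) (x::complex)"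
  by (simp add: poly_prod)

lemma ffact_poly_degree:
  "degree (\<Prod>t<i. [:- of_nat t, 1::complex:]) \<le> i"
proof -
  have "degree (\<Prod>t<i. [:- of_nat t, 1::complex:]) \<le> (\<Sum>t<i. degree [:- of_nat t, 1::complex:])"
    using degree_prod_sum_le[of "{..<i}" "\<lambda>t. [:- of_nat t, 1::complex:]"] by (simp add: o_def)
  also have "\<dots> = i" by simp
  finally show ?thesis .
qed

lemma deriv_zero_from_Psi:
  assumes c: "\<forall>n. c n \<in> {-1,0,1}" and z: "norm z < 1" "z \<noteq> 0" and P: "\<forall>j\<le>i. Psi c z j = 0"
  shows "(deriv ^^ i) (ps_fun c) z = 0"
proof -
  define F where "F = Abs_fps (\<lambda>n. of_int (c n) :: complex)"
  have cb: "\<forall>n. \<bar>c n\<bar> \<le> 1"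
  proof
    fix n have "c n \<in> {-1,0,1}" using c by blast
    then show "\<bar>c n\<bar> \<le> 1" by auto
  qed
  have pf: "ps_fun c = eval_fps F" by (simp add: fun_eq_iff ps_fun_def eval_fps_def F_def)
  define r where "r = (1 + norm z) / 2"
  have r: "norm z < r" "r < 1" using z by (auto simp: r_def)
  have "\<bar>r\<bar> < 1" using r norm_ge_zero[of z] by linarith
  then have "summable (\<lambda>n. fps_nth F n * complex_of_real r ^ n)"
    using Psi_summable[OF cb, of "complex_of_real r" 0] by (simp add: F_def)
  then have "conv_radius (fps_nth F) \<ge> norm (complex_of_real r)" by (rule conv_radius_geI)
  then have rad: "ereal (norm z) < fps_conv_radius F"
  proof -
    have "ereal (norm z) < ereal \<bar>r\<bar>" using r by simp
    also have "\<dots> \<le> conv_radius (fps_nth F)" using \<open>conv_radius (fps_nth F) \<ge> norm (complex_of_real r)\<close> by simp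
    finally show ?thesis by (simp add: fps_conv_radius_def)
  qed
  define P where "P = (\<Prod>t<i. [:- of_nat t, 1::complex:])"
  have "eval_fps (fps_X ^ i * fps_nth_deriv i F) z = eval_fps (fps_X ^ i) z * eval_fps (fps_nth_deriv i F) z"
    using rad fps_conv_radius_nth_deriv[of F i] by (intro eval_fps_mult) (auto intro: order.strict_trans2)
  also have "\<dots> = z ^ i * (deriv ^^ i) (ps_fun c) z"
    using higher_deriv_eval_fps[OF rad, of i] pf by simp
  finally have eq1: "z ^ i * (deriv ^^ i) (ps_fun c) z = eval_fps (fps_X ^ i * fps_nth_deriv i F) z" ..
  have "eval_fps (fps_X ^ i * fps_nth_deriv i F) z = (\<Sum>m. of_int (c m) * poly P (of_nat m) * z ^ m)"
    unfolding eval_fps_def fps_X_power_nth_deriv ffact_poly P_def by (simp add: F_def)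
  also have "\<dots> = (\<Sum>m. \<Sum>j\<le>degree P. coeff P j * (of_int (c m) * of_nat m ^ j * z ^ m))"
    by (simp add: poly_altdef sum_distrib_left sum_distrib_right mult_ac)
  also have "\<dots> = (\<Sum>j\<le>degree P. \<Sum>m. coeff P j * (of_int (c m) * of_nat m ^ j * z ^ m))"
    by (intro suminf_sum summable_mult Psi_summable[OF cb z(1)])
  also have "\<dots> = (\<Sum>j\<le>degree P. coeff P j * Psi c z j)"
    by (intro sum.cong refl suminf_mult Psi_summable[OF cb z(1)]) (simp add: Psi_def suminf_mult[OF Psi_summable[OF cb z(1)]])
  also have "\<dots> = 0"
    using P ffact_poly_degree[of i] by (intro sum.neutral) (auto simp: P_def)
  finally show ?thesis using eq1 z by simp
qed



lemma PsiF_cnj: "PsiF M c (cnj z) i = cnj (PsiF M c z i)"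
  by (simp add: PsiF_def)

lemma PsiF_real: assumes "z \<in> \<real>" shows "Im (PsiF M c z i) = 0"
proof -
  have "cnj z = z" using assms by (simp add: Reals_cnj_iff)
  then have "cnj (PsiF M c z i) = PsiF M c z i" using PsiF_cnj[of M c z i] by simp
  then show ?thesis by (metis Reals_cnj_iff complex_is_Real_iff)
qed

lemma PsiF_diff: "PsiF M (\<lambda>n. if n < M then e n - e' n else 0) z i = PsiF M e z i - PsiF M e' z i"
  by (simp add: PsiF_def sum_subtractf[symmetric] algebra_simps)

lemma Psi_eq_PsiF: assumes "\<forall>n\<ge>M. c n = 0" shows "Psi c z i = PsiF M c z i"
  unfolding Psi_def PsiF_def using assms by (intro suminf_finite) auto

lemma PsiF_bound:
  assumes "\<forall>n<M. \<bar>c n\<bar> \<le> 1" "i \<le> K" "norm z < 1"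
  shows "norm (PsiF M c z i) \<le> (1 + real M) ^ K / (1 - norm z)"
proof -
  have "norm (PsiF M c z i) \<le> (\<Sum>n<M. norm (of_int (c n) * of_nat n ^ i * z ^ n :: complex))"
    unfolding PsiF_def by (rule norm_sum)
  also have "\<dots> \<le> (\<Sum>n<M. (1 + real M) ^ K * norm z ^ n)"
  proof (intro sum_mono)
    fix n assume n: "n \<in> {..<M}"
    have cn: "\<bar>real_of_int (c n)\<bar> \<le> 1" using assms(1) n by (metis lessThan_iff of_int_abs of_int_le_1_iff)
    have "real n ^ i \<le> (1 + real M) ^ i" using n by (intro power_mono) auto
    also have "\<dots> \<le> (1 + real M) ^ K" using assms(2) by (intro power_increasing) auto
    finally have nb: "real n ^ i \<le> (1 + real M) ^ K" .
    have "norm (of_int (c n) * of_nat n ^ i * z ^ n :: complex) = \<bar>real_of_int (c n)\<bar> * real n ^ i * norm z ^ n"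
      by (simp add: norm_mult norm_power)
    also have "\<dots> \<le> 1 * (1 + real M) ^ K * norm z ^ n"
      using cn nb by (intro mult_mono) auto
    finally show "norm (of_int (c n) * of_nat n ^ i * z ^ n :: complex) \<le> (1 + real M) ^ K * norm z ^ n" by simp
  qed
  also have "\<dots> = (1 + real M) ^ K * (\<Sum>n<M. norm z ^ n)" by (simp add: sum_distrib_left)
  also have "\<dots> \<le> (1 + real M) ^ K * (1 / (1 - norm z))"
  proof (intro mult_left_mono)
    have "(\<Sum>n<M. norm z ^ n) = (1 - norm z ^ M) / (1 - norm z)"
      using assms(3) by (subst sum_gp_strict) auto
    also have "\<dots> \<le> 1 / (1 - norm z)" using assms(3) by (intro divide_right_mono) auto
    finally show "(\<Sum>n<M. norm z ^ n) \<le> 1 / (1 - norm z)" .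
  qed auto
  finally show ?thesis by simp
qed

lemma PsiF_shift:
  assumes g0: "\<forall>n<s. g n = 0" and gM: "\<forall>n\<ge>M. g n = 0"
  shows "z ^ s * PsiF M (\<lambda>n. g (n + s)) z i =
     (\<Sum>j\<le>i. of_nat (i choose j) * (- of_nat s) ^ (i - j) * PsiF M g z j)"
proof -
  define F where "F m = of_int (g m) * (of_nat m - of_nat s) ^ i * z ^ m" for m
  have "z ^ s * PsiF M (\<lambda>n. g (n + s)) z i = (\<Sum>n<M. F (n + s))"
    unfolding PsiF_def F_def sum_distrib_left by (intro sum.cong refl) (simp add: power_add mult_ac)
  also have "\<dots> = (\<Sum>m\<in>{s..<M+s}. F m)"
    using sum.shift_bounds_nat_ivl[of F 0 s M] by (simp add: atLeast0LessThan)
  also have "\<dots> = (\<Sum>m<M+s. F m)"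
    using g0 by (intro sum.mono_neutral_left) (auto simp: F_def)
  also have "\<dots> = (\<Sum>m<M. F m)"
    using gM by (intro sum.mono_neutral_right) (auto simp: F_def)
  also have "\<dots> = (\<Sum>m<M. \<Sum>j\<le>i. of_nat (i choose j) * (- of_nat s) ^ (i - j) * (of_int (g m) * of_nat m ^ j * z ^ m))"
  proof (intro sum.cong refl)
    fix m
    have "(of_nat m - of_nat s :: complex) ^ i = (of_nat m + (- of_nat s)) ^ i" by simp
    also have "\<dots> = (\<Sum>j\<le>i. of_nat (i choose j) * of_nat m ^ j * (- of_nat s) ^ (i - j))"
      by (rule binomial_ring)
    finally show "F m = (\<Sum>j\<le>i. of_nat (i choose j) * (- of_nat s) ^ (i - j) * (of_int (g m) * of_nat m ^ j * z ^ m))"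
      unfolding F_def by (simp add: sum_distrib_left sum_distrib_right mult_ac)
  qed
  also have "\<dots> = (\<Sum>j\<le>i. of_nat (i choose j) * (- of_nat s) ^ (i - j) * PsiF M g z j)"
    by (subst sum.swap) (simp add: PsiF_def sum_distrib_left)
  finally show ?thesis .
qed

lemma PsiF_shift_bound:
  assumes g0: "\<forall>n<s. g n = 0" and gM: "\<forall>n\<ge>M. g n = 0"
    and b: "\<forall>j\<le>i. norm (PsiF M g z j) \<le> \<beta>"
  shows "norm z ^ s * norm (PsiF M (\<lambda>n. g (n + s)) z i) \<le> (1 + real s) ^ i * \<beta>"
proof -
  have "norm z ^ s * norm (PsiF M (\<lambda>n. g (n + s)) z i) = norm (z ^ s * PsiF M (\<lambda>n. g (n + s)) z i)"
    by (simp add: norm_mult norm_power)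
  also have "\<dots> = norm (\<Sum>j\<le>i. of_nat (i choose j) * (- of_nat s) ^ (i - j) * PsiF M g z j)"
    by (simp only: PsiF_shift[OF g0 gM])
  also have "\<dots> \<le> (\<Sum>j\<le>i. norm (of_nat (i choose j) * (- of_nat s) ^ (i - j) * PsiF M g z j :: complex))"
    by (rule norm_sum)
  also have "\<dots> \<le> (\<Sum>j\<le>i. real (i choose j) * real s ^ (i - j) * \<beta>)"
  proof (intro sum_mono)
    fix j assume "j \<in> {..i}"
    then have "norm (PsiF M g z j) \<le> \<beta>" using b by auto
    then show "norm (of_nat (i choose j) * (- of_nat s) ^ (i - j) * PsiF M g z j :: complex) \<le> real (i choose j) * real s ^ (i - j) * \<beta>"
      by (simp add: norm_mult norm_power mult_left_mono)
  qed
  also have "\<dots> = (\<Sum>j\<le>i. real (i choose j) * 1 ^ j * real s ^ (i - j)) * \<beta>"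
    by (simp add: sum_distrib_right)
  also have "\<dots> = (1 + real s) ^ i * \<beta>"
    by (subst binomial_ring[of 1 "real s" i]) simp
  finally show ?thesis .
qed



lemma approx_zero:
  fixes L :: "complex set" and k :: "complex \<Rightarrow> nat" and \<epsilon> :: real
  assumes fin: "finite L" and Lz: "\<forall>z\<in>L. 0 < norm z \<and> norm z < 1"
    and cj: "\<forall>z\<in>L. cnj z \<in> L \<and> k (cnj z) = k z"
    and Pgt: "(\<Prod>z\<in>L. norm z ^ k z) > 1/2" and eps: "\<epsilon> > 0"
  shows "\<exists>h. h 0 = 1 \<and> (\<forall>n. h n \<in> {-1,0,1}) \<and> (\<forall>z\<in>L. \<forall>i<k z. norm (Psi h z i) \<le> \<epsilon>)"
proof -
  define S where "S = (\<Sum>z\<in>L. k z)"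
  define Pr where "Pr = (\<Prod>z\<in>L. norm z ^ k z)"
  define C where "C = (\<Prod>z\<in>L. (4 / (\<epsilon> * (1 - norm z)) + 3) ^ k z)"
  have q: "2 * Pr > 1" using Pgt by (simp add: Pr_def)
  have "(\<lambda>M. C * (1 + real M) ^ (2 * S * S) / (2 * Pr) ^ M) \<longlonglongrightarrow> 0"
    using q by real_asymp
  then have "eventually (\<lambda>M. C * (1 + real M) ^ (2 * S * S) / (2 * Pr) ^ M < 1) sequentially"
    by (rule order_tendstoD) simp
  then obtain M0 where M0: "\<forall>M\<ge>M0. C * (1 + real M) ^ (2 * S * S) / (2 * Pr) ^ M < 1"
    unfolding eventually_sequentially by blast
  define M where "M = M0"
  have Mb: "C * (1 + real M) ^ (2 * S * S) / (2 * Pr) ^ M < 1" using M0 by (simp add: M_def)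
  define A where "A = (1 + real M) ^ S"
  have A1: "A \<ge> 1" by (simp add: A_def)
  define \<delta> where "\<delta> z = \<epsilon> * norm z ^ M / (2 * A)" for z :: complex
  have \<delta>pos: "\<delta> z > 0" if "z \<in> L" for z using that Lz eps A1 by (auto simp: \<delta>_def)
  define co where "co z w = (if Im z \<ge> 0 then Re w else Im w)" for z w :: complex
  define I where "I = Sigma L (\<lambda>z. {..<k z})"
  define cell where "cell e = restrict (\<lambda>(z,i). \<lfloor>co z (PsiF M e z i) / \<delta> z\<rfloor>) I" for e
  define E where "E = PiE {..<M} (\<lambda>_. {0::int,1})"
  define N where "N z = \<lceil>A / ((1 - norm z) * \<delta> z)\<rceil>" for z
  define T where "T = PiE I (\<lambda>(z,i). {- N z..N z})"
  have kS: "k z \<le> S" if "z \<in> L" for z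
    unfolding S_def using fin that by (intro member_le_sum) auto
  have cellT: "cell ` E \<subseteq> T"
  proof
    fix x assume "x \<in> cell ` E"
    then obtain e where e: "e \<in> E" and x: "x = cell e" by auto
    have "\<forall>zi\<in>I. (\<lambda>(z,i). \<lfloor>co z (PsiF M e z i) / \<delta> z\<rfloor>) zi \<in> (\<lambda>(z,i). {- N z..N z}) zi"
    proof
      fix zi assume "zi \<in> I"
      then obtain z i where zi: "zi = (z, i)" and z: "z \<in> L" and i: "i < k z" by (auto simp: I_def)
      have "\<forall>n<M. \<bar>e n\<bar> \<le> 1" using e by (auto simp: E_def PiE_def Pi_def)
      then have b: "norm (PsiF M e z i) \<le> A / (1 - norm z)"
        unfolding A_def using Lz z i kS[OF z] by (intro PsiF_bound) auto
      define R where "R = A / ((1 - norm z) * \<delta> z)"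
      have dz: "\<delta> z > 0" using \<delta>pos z .
      have nz: "1 - norm z > 0" using Lz z by auto
      have "\<bar>co z (PsiF M e z i)\<bar> \<le> norm (PsiF M e z i)"
        by (simp add: co_def abs_Re_le_cmod abs_Im_le_cmod)
      also have "\<dots> \<le> A / (1 - norm z)" by (rule b)
      finally have xb: "\<bar>co z (PsiF M e z i)\<bar> \<le> A / (1 - norm z)" .
      have "\<bar>co z (PsiF M e z i) / \<delta> z\<bar> = \<bar>co z (PsiF M e z i)\<bar> / \<delta> z"
        by (rule abs_div_pos[OF dz, symmetric])
      also have "\<dots> \<le> A / (1 - norm z) / \<delta> z" using xb less_imp_le[OF dz] by (rule divide_right_mono)
      also have "\<dots> = R" by (simp add: R_def divide_divide_eq_left)
      finally have yb: "\<bar>co z (PsiF M e z i) / \<delta> z\<bar> \<le> R" .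
      define y where "y = co z (PsiF M e z i) / \<delta> z"
      have yb': "\<bar>y\<bar> \<le> R" using yb by (simp only: y_def)
      have y1: "- R \<le> y" "y \<le> R" using yb' unfolding abs_le_iff by linarith+
      have NR: "N z = \<lceil>R\<rceil>" by (simp add: N_def R_def)
      have "\<lfloor>y\<rfloor> \<le> \<lceil>R\<rceil>"
      proof -
        have "real_of_int \<lfloor>y\<rfloor> \<le> real_of_int \<lceil>R\<rceil>"
          using of_int_floor_le[of y] y1(2) le_of_int_ceiling[of R] by linarith
        then show ?thesis by (simp only: of_int_le_iff)
      qed
      moreover have "- \<lceil>R\<rceil> \<le> \<lfloor>y\<rfloor>"
      proof -
        have "\<lfloor>- R\<rfloor> \<le> \<lfloor>y\<rfloor>" using y1(1) by (rule floor_mono)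
        then show ?thesis by (simp add: floor_minus)
      qed
      ultimately have "- N z \<le> \<lfloor>co z (PsiF M e z i) / \<delta> z\<rfloor>" "\<lfloor>co z (PsiF M e z i) / \<delta> z\<rfloor> \<le> N z"
        by (simp_all add: NR y_def)
      then show "(\<lambda>(z,i). \<lfloor>co z (PsiF M e z i) / \<delta> z\<rfloor>) zi \<in> (\<lambda>(z,i). {- N z..N z}) zi"
        by (simp add: zi)
    qed
    then show "x \<in> T" unfolding x T_def cell_def by (simp only: restrict_PiE_iff)
  qed
  have finI: "finite I" using fin by (simp add: I_def)
  have cardT: "card T = (\<Prod>z\<in>L. nat (2 * N z + 1) ^ k z)"
  proof -
    have "card T = (\<Prod>zi\<in>I. card ((\<lambda>(z,i). {- N z..N z}) zi))"
      unfolding T_def using finI by (rule card_PiE)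
    also have "\<dots> = (\<Prod>(z,i)\<in>I. nat (2 * N z + 1))"
      by (intro prod.cong refl) auto
    also have "\<dots> = (\<Prod>z\<in>L. \<Prod>i\<in>{..<k z}. nat (2 * N z + 1))"
      unfolding I_def using fin by (subst prod.Sigma) auto
    also have "\<dots> = (\<Prod>z\<in>L. nat (2 * N z + 1) ^ k z)" by simp
    finally show ?thesis .
  qed
  have cardE: "card E = 2 ^ M" by (simp add: E_def card_PiE numeral_2_eq_2)
  have Tlt: "real (card T) < 2 ^ M"
  proof -
    have "real (card T) = (\<Prod>z\<in>L. real (nat (2 * N z + 1)) ^ k z)"
      by (simp add: cardT)
    also have "\<dots> \<le> (\<Prod>z\<in>L. ((4 / (\<epsilon> * (1 - norm z)) + 3) * (A ^ 2 / norm z ^ M)) ^ k z)"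
    proof (intro prod_mono conjI)
      fix z assume z: "z \<in> L"
      have nz: "1 - norm z > 0" "norm z > 0" "norm z < 1" using Lz z by auto
      have dz: "\<delta> z > 0" using \<delta>pos z .
      have "0 < A / ((1 - norm z) * \<delta> z)" using nz dz A1 by (intro divide_pos_pos mult_pos_pos) auto
      then have Npos: "N z \<ge> 0" unfolding N_def by simp
      have R: "A / ((1 - norm z) * \<delta> z) = 2 * A ^ 2 / (\<epsilon> * (1 - norm z) * norm z ^ M)"
        using nz eps A1 by (simp add: \<delta>_def field_simps power2_eq_square)
      have "real (nat (2 * N z + 1)) = 2 * real_of_int (N z) + 1" using Npos by simp
      also have "\<dots> \<le> 2 * (A / ((1 - norm z) * \<delta> z) + 1) + 1"
      proof -
        define X where "X = A / ((1 - norm z) * \<delta> z)"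
        have "real_of_int (N z) \<le> X + 1"
          unfolding N_def X_def by (rule of_int_ceiling_le_add_one)
        then show ?thesis unfolding X_def[symmetric] by (intro add_right_mono mult_left_mono) auto
      qed
      also have "\<dots> = 4 / (\<epsilon> * (1 - norm z)) * (A ^ 2 / norm z ^ M) + 3"
        unfolding R using nz eps by (simp add: field_simps)
      also have "\<dots> \<le> 4 / (\<epsilon> * (1 - norm z)) * (A ^ 2 / norm z ^ M) + 3 * (A ^ 2 / norm z ^ M)"
      proof -
        have "norm z ^ M \<le> 1" using nz by (simp add: power_le_one)
        moreover have "1 \<le> A ^ 2" using A1 by (simp add: one_le_power)
        ultimately have "1 \<le> A ^ 2 / norm z ^ M" using nz by (simp add: field_simps)
        then show ?thesis by simp
      qed
      also have "\<dots> = (4 / (\<epsilon> * (1 - norm z)) + 3) * (A ^ 2 / norm z ^ M)" by (simp add: algebra_simps)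
      finally have "real (nat (2 * N z + 1)) \<le> (4 / (\<epsilon> * (1 - norm z)) + 3) * (A ^ 2 / norm z ^ M)" .
      then show "real (nat (2 * N z + 1)) ^ k z \<le> ((4 / (\<epsilon> * (1 - norm z)) + 3) * (A ^ 2 / norm z ^ M)) ^ k z"
        by (intro power_mono) auto
    qed auto
    also have "\<dots> = C * (\<Prod>z\<in>L. (A ^ 2) ^ k z) / (\<Prod>z\<in>L. (norm z ^ M) ^ k z)"
      unfolding C_def power_mult_distrib power_divide prod.distrib prod_dividef by (rule times_divide_eq_right)
    also have "(\<Prod>z\<in>L. (norm z ^ M) ^ k z) = (\<Prod>z\<in>L. norm z ^ k z) ^ M"
    proof -
      have "(\<Prod>z\<in>L. (norm z ^ M) ^ k z) = (\<Prod>z\<in>L. (norm z ^ k z) ^ M)"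
        by (intro prod.cong refl) (simp only: power_mult[symmetric] mult.commute)
      also have "\<dots> = (\<Prod>z\<in>L. norm z ^ k z) ^ M" by (rule prod_power_distrib[symmetric])
      finally show ?thesis .
    qed
    also have "(\<Prod>z\<in>L. (A ^ 2) ^ k z) = (1 + real M) ^ (2 * S * S)"
    proof -
      have "(\<Prod>z\<in>L. (A ^ 2) ^ k z) = (A ^ 2) ^ S" unfolding S_def by (rule power_sum[symmetric])
      also have "\<dots> = (1 + real M) ^ (S * (2 * S))" unfolding A_def power_mult by simp
      finally show ?thesis by (simp only: mult.commute mult.left_commute)
    qed
    also have "C * (1 + real M) ^ (2 * S * S) / (\<Prod>z\<in>L. norm z ^ k z) ^ M
        = (C * (1 + real M) ^ (2 * S * S) / (2 * Pr) ^ M) * 2 ^ M"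
      using q by (simp add: Pr_def power_mult_distrib field_simps)
    also have "\<dots> < 1 * 2 ^ M" using Mb by (intro mult_strict_right_mono) auto
    finally show ?thesis by simp
  qed
  have "\<not> inj_on cell E"
  proof
    assume "inj_on cell E"
    then have c1: "card (cell ` E) = card E" by (rule card_image)
    have c2: "card (cell ` E) \<le> card T"
    proof (rule card_mono[OF _ cellT])
      show "finite T" unfolding T_def using finI by (intro finite_PiE) (auto split: prod.splits)
    qed
    have "card E \<le> card T" using c1 c2 by simp
    then have "real (card E) \<le> real (card T)" by (simp only: of_nat_le_iff)
    then show False using Tlt cardE by simp
  qed
  then obtain e e' where e: "e \<in> E" and e': "e' \<in> E" and ne: "e \<noteq> e'" and ce: "cell e = cell e'"
    by (auto simp: inj_on_def)
  define g where "g n = (if n < M then e n - e' n else 0)" for n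
  have gv: "g n \<in> {-1,0,1}" for n
  proof (cases "n < M")
    case True
    then have "e n \<in> {0,1}" "e' n \<in> {0,1}" using e e' by (auto simp: E_def PiE_iff)
    then show ?thesis using True by (auto simp: g_def)
  qed (simp add: g_def)
  have gM: "\<forall>n\<ge>M. g n = 0" by (simp add: g_def)
  have co_small: "\<bar>co z (PsiF M g z i)\<bar> < \<delta> z" if z: "z \<in> L" and i: "i < k z" for z i
  proof -
    have "(z, i) \<in> I" using z i by (simp add: I_def)
    moreover have "cell e (z, i) = cell e' (z, i)" using ce by simp
    ultimately have fl: "\<lfloor>co z (PsiF M e z i) / \<delta> z\<rfloor> = \<lfloor>co z (PsiF M e' z i) / \<delta> z\<rfloor>"
      by (simp add: cell_def)
    define a where "a = co z (PsiF M e z i)"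
    define b where "b = co z (PsiF M e' z i)"
    have dp: "\<delta> z > 0" using \<delta>pos z .
    have fl': "\<lfloor>a / \<delta> z\<rfloor> = \<lfloor>b / \<delta> z\<rfloor>" using fl by (simp only: a_def b_def)
    have "\<bar>a / \<delta> z - b / \<delta> z\<bar> < 1"
    proof -
      define u where "u = a / \<delta> z"
      define v where "v = b / \<delta> z"
      have "\<lfloor>u\<rfloor> = \<lfloor>v\<rfloor>" using fl' by (simp only: u_def v_def)
      then have "\<bar>u - v\<bar> < 1" by linarith
      then show ?thesis by (simp only: u_def v_def)
    qed
    then have "\<bar>(a - b) / \<delta> z\<bar> < 1" by (simp only: diff_divide_distrib)
    then have "\<bar>a - b\<bar> / \<delta> z < 1" by (simp only: abs_div_pos[OF dp])
    then have ab: "\<bar>a - b\<bar> < \<delta> z" using dp by (simp only: pos_divide_less_eq mult_1)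
    have "co z (PsiF M g z i) = a - b"
      unfolding g_def PsiF_diff a_def b_def by (simp add: co_def)
    then show ?thesis using ab by simp
  qed
  have small: "norm (PsiF M g z i) \<le> 2 * \<delta> z" if z: "z \<in> L" and i: "i < k z" for z i
  proof -
    define w where "w = PsiF M g z i"
    have cz: "cnj z \<in> L" "k (cnj z) = k z" using cj z by auto
    have dc: "\<delta> (cnj z) = \<delta> z" by (simp add: \<delta>_def)
    have wc: "PsiF M g (cnj z) i = cnj w" by (simp add: w_def PsiF_cnj)
    have cc: "\<bar>co (cnj z) (cnj w)\<bar> < \<delta> z"
      using co_small[OF cz(1), of i] i cz(2) by (simp only: wc dc)
    have "\<bar>Re w\<bar> < \<delta> z \<and> \<bar>Im w\<bar> < \<delta> z"
    proof (cases "Im z" "0::real" rule: linorder_cases)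
      case less
      then have "\<bar>Im w\<bar> < \<delta> z" using co_small[OF z i] by (simp add: co_def w_def)
      moreover have "\<bar>Re w\<bar> < \<delta> z" using cc less by (simp add: co_def)
      ultimately show ?thesis by simp
    next
      case equal
      then have "z \<in> \<real>" by (simp add: complex_is_Real_iff)
      then have "Im w = 0" by (simp add: w_def PsiF_real)
      moreover have "\<bar>Re w\<bar> < \<delta> z" using co_small[OF z i] equal by (simp add: co_def w_def)
      moreover have "\<delta> z > 0" using \<delta>pos z .
      ultimately show ?thesis by simp
    next
      case greater
      then have "\<bar>Re w\<bar> < \<delta> z" using co_small[OF z i] by (simp add: co_def w_def)
      moreover have "\<bar>Im w\<bar> < \<delta> z" using cc greater by (simp add: co_def)
      ultimately show ?thesis by simp
    qed
    then have "norm w \<le> 2 * \<delta> z" using cmod_le[of w] by linarith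
    then show ?thesis by (simp add: w_def)
  qed
  have "\<exists>n. g n \<noteq> 0"
  proof (rule ccontr)
    assume "\<not> (\<exists>n. g n \<noteq> 0)"
    then have gz: "g n = 0" for n by blast
    have "e n = e' n" for n
    proof (cases "n < M")
      case True
      then show ?thesis using gz[of n] by (simp add: g_def)
    next
      case False
      then show ?thesis using e e' by (auto simp: E_def PiE_def extensional_def)
    qed
    then show False using ne by auto
  qed
  then obtain n0 where n0: "g n0 \<noteq> 0" by auto
  define s where "s = (LEAST n. g n \<noteq> 0)"
  have gs: "g s \<noteq> 0" unfolding s_def using n0 by (rule LeastI)
  have g0: "\<forall>n<s. g n = 0" unfolding s_def using not_less_Least by blast
  have sM: "s < M" using gs gM by (metis not_le)
  define \<sigma> where "\<sigma> = g s"
  have \<sigma>: "\<sigma> * \<sigma> = 1" using gs gv[of s] by (auto simp: \<sigma>_def)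
  define h where "h n = \<sigma> * g (n + s)" for n
  have h0: "h 0 = 1" using \<sigma> by (simp add: h_def \<sigma>_def)
  have hv: "h n \<in> {-1,0,1}" for n using gv[of "n+s"] gv[of s] gs by (auto simp: h_def \<sigma>_def)
  have hM: "\<forall>n\<ge>M. h n = 0" using gM by (simp add: h_def)
  have "norm (Psi h z i) \<le> \<epsilon>" if z: "z \<in> L" and i: "i < k z" for z i
  proof -
    have nz: "norm z > 0" "norm z < 1" using Lz z by auto
    have "Psi h z i = PsiF M h z i" using hM by (rule Psi_eq_PsiF)
    also have "PsiF M h z i = of_int \<sigma> * PsiF M (\<lambda>n. g (n + s)) z i"
      unfolding PsiF_def h_def of_int_mult sum_distrib_left by (simp only: mult.assoc)
    finally have nh0: "Psi h z i = of_int \<sigma> * PsiF M (\<lambda>n. g (n + s)) z i" .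
    have sig: "\<sigma> = 1 \<or> \<sigma> = -1" using gv[of s] gs by (auto simp: \<sigma>_def)
    have nh: "norm (Psi h z i) = norm (PsiF M (\<lambda>n. g (n + s)) z i)"
      using sig unfolding nh0 by (elim disjE) simp_all
    have "\<forall>j\<le>i. norm (PsiF M g z j) \<le> 2 * \<delta> z" using small z i by auto
    then have "norm z ^ s * norm (PsiF M (\<lambda>n. g (n + s)) z i) \<le> (1 + real s) ^ i * (2 * \<delta> z)"
      by (intro PsiF_shift_bound g0 gM)
    also have "\<dots> \<le> A * (2 * \<delta> z)"
    proof (intro mult_right_mono)
      have "(1 + real s) ^ i \<le> (1 + real M) ^ i" using sM by (intro power_mono) auto
      also have "\<dots> \<le> (1 + real M) ^ S" using kS[OF z] i by (intro power_increasing) auto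
      finally show "(1 + real s) ^ i \<le> A" by (simp add: A_def)
    qed (use \<delta>pos z in \<open>auto intro: less_imp_le\<close>)
    also have "\<dots> = \<epsilon> * norm z ^ M" using A1 by (simp add: \<delta>_def)
    also have "\<dots> \<le> \<epsilon> * norm z ^ s" using eps nz sM by (intro mult_left_mono power_decreasing) auto
    finally have "norm z ^ s * norm (PsiF M (\<lambda>n. g (n + s)) z i) \<le> norm z ^ s * \<epsilon>" by (simp add: mult_ac)
    then have "norm (PsiF M (\<lambda>n. g (n + s)) z i) \<le> \<epsilon>" using nz by (simp add: mult_le_cancel_left_pos)
    then show ?thesis using nh by simp
  qed
  then show ?thesis using h0 hv by blast
qed



lemma Psi_tail_bound:
  assumes "\<forall>n. \<bar>c n\<bar> \<le> 1" "norm w \<le> r" "r < 1"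
  shows "norm (Psi c w i - PsiF n0 c w i) \<le> (\<Sum>j. real (j + n0) ^ i * r ^ (j + n0))"
proof -
  have r0: "0 \<le> r" using assms(2) norm_ge_zero order_trans by blast
  have sf: "summable (\<lambda>n. of_int (c n) * of_nat n ^ i * w ^ n :: complex)"
    using Psi_norm_summable[OF assms] by (rule summable_norm_cancel)
  have "Psi c w i - PsiF n0 c w i = (\<Sum>j. of_int (c (j + n0)) * of_nat (j + n0) ^ i * w ^ (j + n0))"
    unfolding Psi_def PsiF_def using suminf_split_initial_segment[OF sf, of n0] by simp
  also have "norm \<dots> \<le> (\<Sum>j. real (j + n0) ^ i * r ^ (j + n0))"
  proof (rule norm_suminf_le)
    fix j
    have cn: "\<bar>real_of_int (c (j + n0))\<bar> \<le> 1" using assms(1) by (metis of_int_abs of_int_le_1_iff)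
    have "norm (of_int (c (j + n0)) * of_nat (j + n0) ^ i * w ^ (j + n0) :: complex)
        = \<bar>real_of_int (c (j + n0))\<bar> * (real (j + n0) ^ i * norm w ^ (j + n0))"
      by (simp add: norm_mult norm_power del: of_nat_add)
    also have "\<dots> \<le> 1 * (real (j + n0) ^ i * r ^ (j + n0))"
      using assms cn by (intro mult_mono mult_left_mono power_mono) auto
    finally show "norm (of_int (c (j + n0)) * of_nat (j + n0) ^ i * w ^ (j + n0) :: complex) \<le> real (j + n0) ^ i * r ^ (j + n0)"
      by simp
  next
    show "summable (\<lambda>j. real (j + n0) ^ i * r ^ (j + n0))"
      using summable_ignore_initial_segment[OF summable_npow[OF r0 assms(3), of i], of n0] by simp
  qed
  finally show ?thesis .
qed

lemma tri4: "norm (a::complex) \<le> norm (a - b) + norm (b - c) + norm (d - c) + norm d"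
proof -
  have e: "(a - b) + (b - c) - (d - c) + d = a" by simp
  have 1: "norm ((a - b) + (b - c) - (d - c) + d) \<le> norm ((a - b) + (b - c) - (d - c)) + norm d"
    by (rule norm_triangle_ineq)
  have 2: "norm ((a - b) + (b - c) - (d - c)) \<le> norm ((a - b) + (b - c)) + norm (d - c)"
    by (rule norm_triangle_ineq4)
  have 3: "norm ((a - b) + (b - c)) \<le> norm (a - b) + norm (b - c)"
    by (rule norm_triangle_ineq)
  show ?thesis using 1 2 3 unfolding e by linarith
qed

theorem corollary2p4:
  fixes L :: "complex set" and k :: "complex \<Rightarrow> nat"
  assumes "finite L"
    and "L \<subseteq> ball 0 1"
    and "\<And>z. z \<in> L \<Longrightarrow> k z \<ge> 1"
    and "\<And>z. z \<in> L \<Longrightarrow> z \<notin> \<real> \<Longrightarrow> cnj z \<in> L \<and> k (cnj z) = k z"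
    and "(\<Prod>z\<in>L. norm z ^ k z) \<ge> 1/2"
  shows "\<exists>a\<in>coeffs_B. \<forall>z\<in>L. zero_mult_ge (ps_fun a) z (k z)"
proof (cases "L = {}")
  case True
  show ?thesis
    by (rule bexI[of _ "\<lambda>n. if n = 0 then 1 else 0"]) (auto simp: True coeffs_B_def)
next
  case Lne: False
  note fin = assms(1)
  have L0: "0 \<notin> L"
  proof
    assume "0 \<in> L"
    then have "(\<Prod>z\<in>L. norm z ^ k z) = 0"
      using fin assms(3)[of 0] by (intro prod_zero) (auto intro!: bexI[of _ 0])
    then show False using assms(5) by simp
  qed
  have Lz: "\<forall>z\<in>L. 0 < norm z \<and> norm z < 1" using assms(2) L0 by (auto simp: subset_iff)
  have cj: "\<forall>z\<in>L. cnj z \<in> L \<and> k (cnj z) = k z"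
    using assms(4) by (metis Reals_cnj_iff)
  define Pr where "Pr = (\<Prod>z\<in>L. norm z ^ k z)"
  have Pr: "Pr \<ge> 1/2" using assms(5) by (simp add: Pr_def)
  define S where "S = (\<Sum>z\<in>L. k z)"
  have S1: "S \<ge> 1"
  proof -
    obtain z0 where z0: "z0 \<in> L" using Lne by auto
    have "k z0 \<le> S" unfolding S_def using fin z0 by (intro member_le_sum) auto
    then show ?thesis using assms(3)[OF z0] by simp
  qed
  define \<rho> where "\<rho> = Max (norm ` L)"
  have \<rho>: "\<rho> < 1" "\<rho> > 0" "\<forall>z\<in>L. norm z \<le> \<rho>"
  proof -
    have "\<rho> \<in> norm ` L" unfolding \<rho>_def using fin Lne by (intro Max_in) auto
    then show "\<rho> < 1" "\<rho> > 0" using Lz by auto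
    show "\<forall>z\<in>L. norm z \<le> \<rho>" unfolding \<rho>_def using fin by auto
  qed
  define r0 where "r0 = (1 + \<rho>) / 2"
  have r0: "\<rho> < r0" "r0 < 1" using \<rho> by (auto simp: r0_def)
  define c where "c = r0 / \<rho> - 1"
  have c: "c > 0" using r0 \<rho> by (simp add: c_def field_simps)
  define t where "t m = 1 + c / (real m + 1)" for m :: nat
  have t1: "t m > 1" for m using c by (simp add: t_def)
  have tle: "t m \<le> 1 + c" for m using c by (simp add: t_def field_simps)
  have tz: "t m * norm z \<le> r0" if "z \<in> L" for m z
  proof -
    have "t m * norm z \<le> (1 + c) * \<rho>" using tle[of m] \<rho> that t1[of m] by (intro mult_mono) auto
    also have "\<dots> = r0" using \<rho> by (simp add: c_def field_simps)
    finally show ?thesis .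
  qed
  have "\<forall>m. \<exists>h. h 0 = 1 \<and> (\<forall>n. h n \<in> {-1,0,1}) \<and>
      (\<forall>z\<in>L. \<forall>i<k z. norm (Psi h (of_real (t m) * z) i) \<le> 1 / (real m + 1))"
  proof
    fix m
    define Lm where "Lm = (\<lambda>z. of_real (t m) * z) ` L"
    define km where "km w = k (w / of_real (t m))" for w
    have tne: "complex_of_real (t m) \<noteq> 0" using t1[of m] by simp
    have inj: "inj_on (\<lambda>z. of_real (t m) * z) L" using tne by (auto simp: inj_on_def)
    have km: "km (of_real (t m) * z) = k z" for z using tne by (simp add: km_def)
    have "\<exists>h. h 0 = 1 \<and> (\<forall>n. h n \<in> {-1,0,1}) \<and> (\<forall>w\<in>Lm. \<forall>i<km w. norm (Psi h w i) \<le> 1 / (real m + 1))"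
    proof (rule approx_zero)
      show "finite Lm" using fin by (simp add: Lm_def)
      show "\<forall>w\<in>Lm. 0 < norm w \<and> norm w < 1"
      proof
        fix w assume "w \<in> Lm"
        then obtain z where z: "z \<in> L" and w: "w = of_real (t m) * z" by (auto simp: Lm_def)
        have nw: "norm w = t m * norm z" using t1[of m] by (simp add: w norm_mult)
        have "0 < t m * norm z" using Lz z t1[of m] by simp
        moreover have "t m * norm z < 1" using tz[OF z, of m] r0 by linarith
        ultimately show "0 < norm w \<and> norm w < 1" by (simp add: nw)
      qed
      show "\<forall>w\<in>Lm. cnj w \<in> Lm \<and> km (cnj w) = km w"
      proof
        fix w assume "w \<in> Lm"
        then obtain z where z: "z \<in> L" and w: "w = of_real (t m) * z" by (auto simp: Lm_def)
        have "cnj w = of_real (t m) * cnj z" by (simp add: w)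
        then show "cnj w \<in> Lm \<and> km (cnj w) = km w" using cj z by (auto simp: Lm_def w km)
      qed
      have "(\<Prod>w\<in>Lm. norm w ^ km w) = (\<Prod>z\<in>L. norm (of_real (t m) * z) ^ km (of_real (t m) * z))"
        unfolding Lm_def by (rule prod.reindex[OF inj, unfolded o_def])
      also have "\<dots> = (\<Prod>z\<in>L. t m ^ k z * norm z ^ k z)"
        using t1[of m] by (intro prod.cong refl) (simp add: km norm_mult power_mult_distrib)
      also have "\<dots> = t m ^ S * Pr" by (simp add: prod.distrib power_sum S_def Pr_def)
      finally have eq: "(\<Prod>w\<in>Lm. norm w ^ km w) = t m ^ S * Pr" .
      have t1S: "1 < t m ^ S" using t1[of m] S1 by (simp add: one_less_power)
      have Prp: "0 < Pr" using Pr by simp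
      have lt: "1 * Pr < t m ^ S * Pr" using mult_strict_right_mono[OF t1S Prp] .
      show "(\<Prod>w\<in>Lm. norm w ^ km w) > 1/2" unfolding eq using lt Pr by linarith
      show "1 / (real m + 1) > 0" by simp
    qed
    then obtain h where h: "h 0 = 1" "\<forall>n. h n \<in> {-1,0,1}" "\<forall>w\<in>Lm. \<forall>i<km w. norm (Psi h w i) \<le> 1 / (real m + 1)"
      by blast
    show "\<exists>h. h 0 = 1 \<and> (\<forall>n. h n \<in> {-1,0,1}) \<and>
      (\<forall>z\<in>L. \<forall>i<k z. norm (Psi h (of_real (t m) * z) i) \<le> 1 / (real m + 1))"
      using h by (intro exI[of _ h]) (auto simp: Lm_def km)
  qed
  then obtain H where H0: "\<And>m. H m 0 = 1" and Hv: "\<And>m n. H m n \<in> {-1,0,1}"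
    and HP: "\<And>m z i. z \<in> L \<Longrightarrow> i < k z \<Longrightarrow> norm (Psi (H m) (of_real (t m) * z) i) \<le> 1 / (real m + 1)"
    by metis
  define Tn where "Tn = rec_nat (UNIV :: nat set) (\<lambda>n X. {m\<in>X. H m n = (SOME v. infinite {m\<in>X. H m n = v})})"
  define h where "h n = (SOME v. infinite {m\<in>Tn n. H m n = v})" for n
  have TSuc: "Tn (Suc n) = {m\<in>Tn n. H m n = h n}" for n by (simp add: Tn_def h_def)
  have T0: "Tn 0 = UNIV" by (simp add: Tn_def)
  have inf: "infinite (Tn n)" for n
  proof (induction n)
    case 0 then show ?case by (simp add: T0)
  next
    case (Suc n)
    have sub: "(\<lambda>m. H m n) ` Tn n \<subseteq> {-1,0,1}" using Hv by blast
    have "finite ((\<lambda>m. H m n) ` Tn n)" by (rule finite_subset[OF sub]) simp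
    then obtain a0 where "a0 \<in> Tn n" "infinite {m\<in>Tn n. H m n = H a0 n}"
      using pigeonhole_infinite[OF Suc.IH] by blast
    then have "\<exists>v. infinite {m\<in>Tn n. H m n = v}" by blast
    then have "infinite {m\<in>Tn n. H m n = h n}" unfolding h_def by (rule someI_ex)
    then show ?case by (simp add: TSuc)
  qed
  have agree: "\<forall>j<n. H m j = h j" if "m \<in> Tn n" for m n
    using that
  proof (induction n arbitrary: m)
    case (Suc n) then show ?case by (auto simp: TSuc less_Suc_eq)
  qed simp
  have hv: "h n \<in> {-1,0,1}" for n
  proof -
    obtain m where "m \<in> Tn (Suc n)" using inf[of "Suc n"] by (metis finite.emptyI ex_in_conv)
    then have "H m n = h n" using agree by auto
    then show ?thesis using Hv[of m n] by simp
  qed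
  have h0: "h 0 = 1"
  proof -
    obtain m where "m \<in> Tn (Suc 0)" using inf[of "Suc 0"] by (metis finite.emptyI ex_in_conv)
    then have "H m 0 = h 0" using agree by auto
    then show ?thesis using H0[of m] by simp
  qed
  have hb: "\<forall>n. \<bar>h n\<bar> \<le> 1"
  proof
    fix n have "h n \<in> {-1,0,1}" by (rule hv)
    then show "\<bar>h n\<bar> \<le> 1" by auto
  qed
  have Hb: "\<forall>n. \<bar>H m n\<bar> \<le> 1" for m
  proof
    fix n have "H m n \<in> {-1,0,1}" by (rule Hv)
    then show "\<bar>H m n\<bar> \<le> 1" by auto
  qed
  have tlim: "t \<longlonglongrightarrow> 1" unfolding t_def by real_asymp
  have Psi0: "Psi h z i = 0" if z: "z \<in> L" and i: "i < k z" for z i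
  proof -
    have key: "norm (Psi h z i) \<le> 4 * \<eta>" if \<eta>: "\<eta> > 0" for \<eta>
    proof -
      have r00: "0 \<le> r0" using r0 \<rho> by auto
      obtain n0 where n0: "\<forall>n\<ge>n0. norm (\<Sum>j. real (j + n) ^ i * r0 ^ (j + n)) < \<eta>"
        using suminf_exist_split[OF \<eta> summable_npow[OF r00 r0(2), of i]] by blast
      define tail where "tail = (\<Sum>j. real (j + n0) ^ i * r0 ^ (j + n0))"
      have tail: "tail < \<eta>" using n0 by (auto simp: tail_def)
      define U where "U m = (\<Sum>j<n0. real j ^ i * norm (z ^ j - (of_real (t m) * z) ^ j))" for m
      have "U \<longlonglongrightarrow> (\<Sum>j<n0. real j ^ i * norm (z ^ j - (of_real 1 * z) ^ j))"
        unfolding U_def by (intro tendsto_intros tlim)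
      then have "U \<longlonglongrightarrow> 0" by simp
      then have ev1: "eventually (\<lambda>m. U m < \<eta>) sequentially" using \<eta> by (rule order_tendstoD)
      have "(\<lambda>m. 1 / (real m + 1)) \<longlonglongrightarrow> 0" by real_asymp
      then have ev2: "eventually (\<lambda>m. 1 / (real m + 1) < \<eta>) sequentially" using \<eta> by (rule order_tendstoD)
      from eventually_conj[OF ev1 ev2] obtain m0 where m0: "\<And>m. m \<ge> m0 \<Longrightarrow> U m < \<eta> \<and> 1 / (real m + 1) < \<eta>"
        unfolding eventually_sequentially by blast
      obtain m where m: "m \<in> Tn n0" "m \<ge> m0" using inf[of n0] by (metis infinite_nat_iff_unbounded_le)
      have ag: "\<forall>j<n0. H m j = h j" using agree m(1) by blast
      have nz: "norm z \<le> r0" using \<rho> z r0 by force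
      have ntz: "norm (of_real (t m) * z) \<le> r0" using tz[OF z, of m] t1[of m] by (simp add: norm_mult)
      have a1: "norm (Psi h z i - PsiF n0 h z i) \<le> tail"
        unfolding tail_def by (rule Psi_tail_bound[OF hb nz r0(2)])
      have a2: "norm (Psi (H m) (of_real (t m) * z) i - PsiF n0 (H m) (of_real (t m) * z) i) \<le> tail"
        unfolding tail_def by (rule Psi_tail_bound[OF Hb ntz r0(2)])
      have a3: "norm (PsiF n0 h z i - PsiF n0 (H m) (of_real (t m) * z) i) \<le> U m"
      proof -
        have "PsiF n0 h z i - PsiF n0 (H m) (of_real (t m) * z) i =
            (\<Sum>j<n0. of_int (h j) * of_nat j ^ i * (z ^ j - (of_real (t m) * z) ^ j))"
          unfolding PsiF_def using ag by (simp add: sum_subtractf[symmetric] algebra_simps)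
        also have "norm \<dots> \<le> (\<Sum>j<n0. norm (of_int (h j) * of_nat j ^ i * (z ^ j - (of_real (t m) * z) ^ j) :: complex))"
          by (rule norm_sum)
        also have "\<dots> \<le> U m"
          unfolding U_def
        proof (intro sum_mono)
          fix j
          have cn: "\<bar>real_of_int (h j)\<bar> \<le> 1" using hb by (metis of_int_abs of_int_le_1_iff)
          have "norm (of_int (h j) * of_nat j ^ i * (z ^ j - (of_real (t m) * z) ^ j) :: complex)
              = \<bar>real_of_int (h j)\<bar> * (real j ^ i * norm (z ^ j - (of_real (t m) * z) ^ j))"
            by (simp add: norm_mult norm_power)
          also have "\<dots> \<le> 1 * (real j ^ i * norm (z ^ j - (of_real (t m) * z) ^ j))"
            using cn by (intro mult_right_mono) auto
          finally show "norm (of_int (h j) * of_nat j ^ i * (z ^ j - (of_real (t m) * z) ^ j) :: complex)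
              \<le> real j ^ i * norm (z ^ j - (of_real (t m) * z) ^ j)" by simp
        qed
        finally show ?thesis .
      qed
      have a4: "norm (Psi (H m) (of_real (t m) * z) i) \<le> 1 / (real m + 1)" by (rule HP[OF z i])
      have "norm (Psi h z i) \<le> norm (Psi h z i - PsiF n0 h z i) + norm (PsiF n0 h z i - PsiF n0 (H m) (of_real (t m) * z) i)
          + norm (Psi (H m) (of_real (t m) * z) i - PsiF n0 (H m) (of_real (t m) * z) i) + norm (Psi (H m) (of_real (t m) * z) i)"
        by (rule tri4)
      also have "\<dots> \<le> 4 * \<eta>" using a1 a2 a3 a4 tail m0[OF m(2)] by linarith
      finally show ?thesis .
    qed
    show ?thesis
    proof (rule ccontr)
      assume "Psi h z i \<noteq> 0"
      then have "norm (Psi h z i) > 0" by simp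
      then have "norm (Psi h z i) \<le> 4 * (norm (Psi h z i) / 8)" by (intro key) simp
      then show False using \<open>norm (Psi h z i) > 0\<close> by simp
    qed
  qed
  show ?thesis
  proof (rule bexI[of _ h])
    show "h \<in> coeffs_B" using h0 hv by (auto simp: coeffs_B_def)
    show "\<forall>z\<in>L. zero_mult_ge (ps_fun h) z (k z)"
    proof (intro ballI)
      fix z assume z: "z \<in> L"
      show "zero_mult_ge (ps_fun h) z (k z)"
        unfolding zero_mult_ge_def
      proof (intro allI impI)
        fix i assume i: "i < k z"
        show "(deriv ^^ i) (ps_fun h) z = 0"
          using Lz z hv Psi0[OF z] i by (intro deriv_zero_from_Psi) auto
      qed
    qed
  qed
qed

end
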